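(* Every bridged graph satisfies the triangle diamond condition $(TDC)$; consequently every bridged graph is a diamond-weakly modular graph.
   Context: All graphs are finite, simple and connected; $d$ denotes the shortest-path distance. A graph is bridged if it has no isometric cycle of length greater than $3$. A diamond is $K_4$ minus one edge. Triangle diamond condition $(TDC)$: for any three vertices $u,v,w$ with $1=d(v,w)<d(u,v)=d(u,w)$, there exists a common neighbor $z$ of $v$ and $w$ with $d(u,z)=d(u,v)-1$ such that $z$ is adjacent to every vertex $x$ with $d(x,v)=1$, $d(u,x)=d(u,v)-1$ and to every vertex $y$ with $d(y,w)=1$, $d(u,y)=d(u,w)-1$ (so that $v,w,z$ form diamonds with such $x$ and $y$). Quadrangle condition $(QC)$: for any four vertices $u,v,w,y$ with $d(v,y)=d(w,y)=1$ and $2=d(v,w)\le d(u,v)=d(u,w)=d(u,y)-1$, there exists a common neighbor $z$ of $v$ and $w$ with $d(u,z)=d(u,v)-1$. A graph is diamond-weakly modular if its distance function satisfies $(QC)$ and $(TDC)$. *)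

theory Defs
  imports Main
begin

definition simple_graph :: "'a set \<Rightarrow> ('a \<Rightarrow> 'a \<Rightarrow> bool) \<Rightarrow> bool" where
  "simple_graph V E \<longleftrightarrow> finite V \<and> (\<forall>x y. E x y \<longrightarrow> x \<in> V \<and> y \<in> V)
     \<and> (\<forall>x y. E x y \<longrightarrow> E y x) \<and> (\<forall>x. \<not> E x x)"

definition walk :: "'a set \<Rightarrow> ('a \<Rightarrow> 'a \<Rightarrow> bool) \<Rightarrow> 'a list \<Rightarrow> bool" where
  "walk V E xs \<longleftrightarrow> xs \<noteq> [] \<and> set xs \<subseteq> V \<and> (\<forall>i. Suc i < length xs \<longrightarrow> E (xs ! i) (xs ! Suc i))"

definition connected_graph :: "'a set \<Rightarrow> ('a \<Rightarrow> 'a \<Rightarrow> bool) \<Rightarrow> bool" where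
  "connected_graph V E \<longleftrightarrow> (\<forall>u\<in>V. \<forall>v\<in>V. \<exists>xs. walk V E xs \<and> hd xs = u \<and> last xs = v)"

definition gdist :: "'a set \<Rightarrow> ('a \<Rightarrow> 'a \<Rightarrow> bool) \<Rightarrow> 'a \<Rightarrow> 'a \<Rightarrow> nat" where
  "gdist V E u v = (LEAST n. \<exists>xs. walk V E xs \<and> hd xs = u \<and> last xs = v \<and> length xs = Suc n)"

definition isometric_cycle :: "'a set \<Rightarrow> ('a \<Rightarrow> 'a \<Rightarrow> bool) \<Rightarrow> 'a list \<Rightarrow> bool" where
  "isometric_cycle V E cs \<longleftrightarrow> length cs \<ge> 3 \<and> distinct cs \<and> set cs \<subseteq> V
     \<and> (\<forall>i < length cs. E (cs ! i) (cs ! ((i + 1) mod length cs)))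
     \<and> (\<forall>i < length cs. \<forall>j < length cs.
          gdist V E (cs ! i) (cs ! j) =
            min (nat \<bar>int i - int j\<bar>) (length cs - nat \<bar>int i - int j\<bar>))"

definition bridged :: "'a set \<Rightarrow> ('a \<Rightarrow> 'a \<Rightarrow> bool) \<Rightarrow> bool" where
  "bridged V E \<longleftrightarrow> (\<forall>cs. isometric_cycle V E cs \<longrightarrow> length cs \<le> 3)"

definition TDC :: "'a set \<Rightarrow> ('a \<Rightarrow> 'a \<Rightarrow> bool) \<Rightarrow> bool" where
  "TDC V E \<longleftrightarrow> (\<forall>u\<in>V. \<forall>v\<in>V. \<forall>w\<in>V.
     (1 = gdist V E v w \<and> gdist V E v w < gdist V E u v \<and> gdist V E u v = gdist V E u w) \<longrightarrow>
     (\<exists>z\<in>V. E z v \<and> E z w \<and> gdist V E u z = gdist V E u v - 1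
        \<and> (\<forall>x\<in>V. gdist V E x v = 1 \<and> gdist V E u x = gdist V E u v - 1 \<and> x \<noteq> z \<longrightarrow> E z x)
        \<and> (\<forall>y\<in>V. gdist V E y w = 1 \<and> gdist V E u y = gdist V E u w - 1 \<and> y \<noteq> z \<longrightarrow> E z y)))"

definition QC :: "'a set \<Rightarrow> ('a \<Rightarrow> 'a \<Rightarrow> bool) \<Rightarrow> bool" where
  "QC V E \<longleftrightarrow> (\<forall>u\<in>V. \<forall>v\<in>V. \<forall>w\<in>V. \<forall>y\<in>V.
     (gdist V E v y = 1 \<and> gdist V E w y = 1 \<and> 2 = gdist V E v w \<and> gdist V E v w \<le> gdist V E u v
      \<and> gdist V E u v = gdist V E u w \<and> gdist V E u w = gdist V E u y - 1) \<longrightarrow>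
     (\<exists>z\<in>V. E z v \<and> E z w \<and> gdist V E u z = gdist V E u v - 1))"

definition diamond_weakly_modular :: "'a set \<Rightarrow> ('a \<Rightarrow> 'a \<Rightarrow> bool) \<Rightarrow> bool" where
  "diamond_weakly_modular V E \<longleftrightarrow> QC V E \<and> TDC V E"

end

theory Submission
  imports Defs
begin

locale sgraph =
  fixes V :: "'a set" and E :: "'a \<Rightarrow> 'a \<Rightarrow> bool"
  assumes sg: "simple_graph V E" and cg: "connected_graph V E"
begin

abbreviation d where "d \<equiv> gdist V E"

lemma E_V: "E x y \<Longrightarrow> x \<in> V" "E x y \<Longrightarrow> y \<in> V"
  using sg unfolding simple_graph_def by blast+

lemma E_sym: "E x y \<Longrightarrow> E y x"
  using sg unfolding simple_graph_def by blast

lemma E_irr: "\<not> E x x"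
  using sg unfolding simple_graph_def by blast

lemma walk_Nil[simp]: "\<not> walk V E []"
  by (simp add: walk_def)

lemma walk_single[simp]: "walk V E [x] \<longleftrightarrow> x \<in> V"
  by (simp add: walk_def)

lemma walk_Cons2[simp]: "walk V E (x # y # xs) \<longleftrightarrow> E x y \<and> walk V E (y # xs)"
proof
  assume w: "walk V E (x # y # xs)"
  have "E x y" using w unfolding walk_def by (metis Suc_less_eq length_Cons nth_Cons_0 nth_Cons_Suc zero_less_Suc)
  moreover have "walk V E (y # xs)" unfolding walk_def
  proof (intro conjI allI impI)
    show "set (y # xs) \<subseteq> V" using w unfolding walk_def by auto
    fix i assume "Suc i < length (y # xs)"
    then have "Suc (Suc i) < length (x # y # xs)" by simp
    then have "E ((x # y # xs) ! Suc i) ((x # y # xs) ! Suc (Suc i))" using w unfolding walk_def by blast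
    then show "E ((y # xs) ! i) ((y # xs) ! Suc i)" by simp
  qed simp
  ultimately show "E x y \<and> walk V E (y # xs)" by blast
next
  assume h: "E x y \<and> walk V E (y # xs)"
  show "walk V E (x # y # xs)" unfolding walk_def
  proof (intro conjI allI impI)
    show "set (x # y # xs) \<subseteq> V" using h E_V unfolding walk_def by auto
    fix i assume i: "Suc i < length (x # y # xs)"
    show "E ((x # y # xs) ! i) ((x # y # xs) ! Suc i)"
    proof (cases i)
      case 0 then show ?thesis using h by simp
    next
      case (Suc j) then show ?thesis using h i unfolding walk_def by auto
    qed
  qed simp
qed

lemma walk_append: "walk V E xs \<Longrightarrow> walk V E ys \<Longrightarrow> E (last xs) (hd ys) \<Longrightarrow> walk V E (xs @ ys)"
proof (induction xs rule: induct_list012)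
  case 1 then show ?case by simp
next
  case (2 x) then show ?case by (cases ys) auto
next
  case (3 x y zs) then show ?case by auto
qed

lemma walk_rev: "walk V E xs \<Longrightarrow> walk V E (rev xs)"
proof (induction xs rule: induct_list012)
  case 1 then show ?case by simp
next
  case (2 x) then show ?case by simp
next
  case (3 x y zs)
  then have "walk V E (rev (y # zs))" "E y x" "x \<in> V" using E_sym E_V by auto
  then have "walk V E (rev (y # zs) @ [x])" by (intro walk_append) auto
  then show ?case by simp
qed

lemma walk_take: "walk V E xs \<Longrightarrow> 0 < m \<Longrightarrow> walk V E (take m xs)"
  unfolding walk_def
proof (intro conjI allI impI)
  assume w: "xs \<noteq> [] \<and> set xs \<subseteq> V \<and> (\<forall>i. Suc i < length xs \<longrightarrow> E (xs ! i) (xs ! Suc i))" and m: "0 < m"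
  show "take m xs \<noteq> []" using w m by simp
  show "set (take m xs) \<subseteq> V" using w set_take_subset by fast
  fix i assume "Suc i < length (take m xs)"
  then show "E (take m xs ! i) (take m xs ! Suc i)" using w by simp
qed

lemma dist_le: "walk V E xs \<Longrightarrow> hd xs = u \<Longrightarrow> last xs = v \<Longrightarrow> d u v + 1 \<le> length xs"
proof -
  assume a: "walk V E xs" "hd xs = u" "last xs = v"
  then have ne: "xs \<noteq> []" by auto
  then have "length xs = Suc (length xs - 1)" by simp
  then have "d u v \<le> length xs - 1" unfolding gdist_def using a by (intro Least_le) metis
  then show ?thesis using ne by (cases xs) auto
qed

lemma dist_walk: "u \<in> V \<Longrightarrow> v \<in> V \<Longrightarrow> \<exists>xs. walk V E xs \<and> hd xs = u \<and> last xs = v \<and> length xs = Suc (d u v)"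
proof -
  assume uv: "u \<in> V" "v \<in> V"
  then obtain xs where xs: "walk V E xs" "hd xs = u" "last xs = v" using cg unfolding connected_graph_def by blast
  then have "xs \<noteq> []" by auto
  then have "\<exists>n xs. walk V E xs \<and> hd xs = u \<and> last xs = v \<and> length xs = Suc n" using xs
    by (metis Suc_pred length_greater_0_conv)
  then show ?thesis unfolding gdist_def by (rule LeastI_ex)
qed

lemma d_refl[simp]: "u \<in> V \<Longrightarrow> d u u = 0"
  using dist_le[of "[u]" u u] by simp

lemma d_zero: "u \<in> V \<Longrightarrow> v \<in> V \<Longrightarrow> d u v = 0 \<Longrightarrow> u = v"
proof -
  assume a: "u \<in> V" "v \<in> V" "d u v = 0"
  then obtain xs where "walk V E xs" "hd xs = u" "last xs = v" "length xs = 1" using dist_walk by fastforce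
  then show "u = v" by (cases xs) auto
qed

lemma d_sym: "u \<in> V \<Longrightarrow> v \<in> V \<Longrightarrow> d u v = d v u"
proof -
  have *: "d b a \<le> d a b" if ab: "a \<in> V" "b \<in> V" for a b
  proof -
    obtain xs where xs: "walk V E xs" "hd xs = a" "last xs = b" "length xs = Suc (d a b)" using dist_walk[OF ab] by blast
    then have "xs \<noteq> []" by auto
    then have "walk V E (rev xs)" "hd (rev xs) = b" "last (rev xs) = a" using xs walk_rev
      by (auto simp: hd_rev last_rev)
    then show ?thesis using dist_le xs(4) by fastforce
  qed
  assume "u \<in> V" "v \<in> V" then show ?thesis using *[of u v] *[of v u] by simp
qed

lemma d_tri: "u \<in> V \<Longrightarrow> v \<in> V \<Longrightarrow> w \<in> V \<Longrightarrow> d u w \<le> d u v + d v w"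
proof -
  assume uvw: "u \<in> V" "v \<in> V" "w \<in> V"
  obtain xs where xs: "walk V E xs" "hd xs = u" "last xs = v" "length xs = Suc (d u v)" using dist_walk uvw by blast
  obtain ys where ys: "walk V E ys" "hd ys = v" "last ys = w" "length ys = Suc (d v w)" using dist_walk uvw by blast
  show ?thesis
  proof (cases "tl ys = []")
    case True
    then have "ys = [v]" using ys by (cases ys) auto
    then have "w = v" using ys by simp
    then show ?thesis by simp
  next
    case False
    obtain y1 ys' where ysd: "ys = v # y1 # ys'" using ys False by (cases ys; cases "tl ys") auto
    then have "walk V E (y1 # ys')" "E v y1" using ys by auto
    then have "walk V E (xs @ (y1 # ys'))" using xs by (intro walk_append) auto
    moreover have "hd (xs @ (y1 # ys')) = u" using xs by (cases xs) auto
    moreover have "last (xs @ (y1 # ys')) = w" using ys ysd by simp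
    ultimately have "d u w + 1 \<le> length (xs @ (y1 # ys'))" using dist_le by blast
    then show ?thesis using xs ys ysd by simp
  qed
qed

lemma d_edge: "E u v \<Longrightarrow> d u v = 1"
proof -
  assume e: "E u v"
  then have "walk V E [u, v]" using E_V by simp
  then have "d u v \<le> 1" using dist_le[of "[u,v]" u v] by simp
  moreover have "d u v \<noteq> 0" using d_zero e E_V E_irr by metis
  ultimately show ?thesis by simp
qed

lemma d_one: "u \<in> V \<Longrightarrow> v \<in> V \<Longrightarrow> d u v = 1 \<Longrightarrow> E u v"
proof -
  assume a: "u \<in> V" "v \<in> V" "d u v = 1"
  then obtain xs where xs: "walk V E xs" "hd xs = u" "last xs = v" "length xs = 2" using dist_walk by fastforce
  then obtain a b where "xs = [a, b]" by (cases xs; cases "tl xs") auto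
  then show ?thesis using xs by simp
qed

lemma d_pred: "u \<in> V \<Longrightarrow> v \<in> V \<Longrightarrow> d u v = Suc k \<Longrightarrow> \<exists>x\<in>V. E x v \<and> d u x = k"
proof -
  assume a: "u \<in> V" "v \<in> V" "d u v = Suc k"
  then obtain xs where xs: "walk V E xs" "hd xs = u" "last xs = v" "length xs = Suc (Suc k)" using dist_walk by fastforce
  define x where "x = xs ! k"
  have l: "last xs = xs ! Suc k" using xs(4) by (subst last_conv_nth) auto
  have "Suc k < length xs" using xs(4) by simp
  then have e: "E x v" using xs(1) l xs(3) unfolding walk_def x_def by metis
  have xV: "x \<in> V" using e E_V by blast
  have wt: "walk V E (take (Suc k) xs)" using walk_take xs by blast
  have ht: "hd (take (Suc k) xs) = u" using xs by (cases xs) auto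
  have lt: "last (take (Suc k) xs) = x" using xs(4) unfolding x_def by (subst last_conv_nth) auto
  have "d u x + 1 \<le> length (take (Suc k) xs)" by (rule dist_le[OF wt ht lt])
  then have "d u x \<le> k" using xs(4) by simp
  moreover have "d u v \<le> d u x + d x v" using d_tri a xV by blast
  moreover have "d x v = 1" using d_edge e by blast
  ultimately have "d u x = k" using a by simp
  then show ?thesis using e xV by blast
qed

end


context sgraph
begin

lemma lev1: "u \<in> V \<Longrightarrow> E p q \<Longrightarrow> d u q \<le> Suc (d u p)"
  using d_tri[of u p q] d_edge[of p q] E_V by fastforce

lemma lev2: "u \<in> V \<Longrightarrow> E p q \<Longrightarrow> d u p \<le> Suc (d u q)"
  using lev1 E_sym by blast

lemma d_le2: "E p r \<Longrightarrow> E r q \<Longrightarrow> d p q \<le> 2"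
  using d_tri[of p r q] d_edge E_V by fastforce

lemma d_two: "E p r \<Longrightarrow> E r q \<Longrightarrow> p \<noteq> q \<Longrightarrow> \<not> E p q \<Longrightarrow> d p q = 2"
proof -
  assume a: "E p r" "E r q" "p \<noteq> q" "\<not> E p q"
  have "d p q \<le> 2" using d_le2 a by blast
  moreover have "d p q \<noteq> 0" using d_zero a E_V by metis
  moreover have "d p q \<noteq> 1" using d_one a E_V by metis
  ultimately show ?thesis by linarith
qed

lemma d_lev_ge: "u \<in> V \<Longrightarrow> p \<in> V \<Longrightarrow> q \<in> V \<Longrightarrow> d u q \<le> d u p + d p q"
  using d_tri by blast

definition Iv where "Iv u v = {z \<in> V. d u z + d z v = d u v}"

lemma Iv_V: "z \<in> Iv u v \<Longrightarrow> z \<in> V" by (simp add: Iv_def)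
lemma Iv_eq: "z \<in> Iv u v \<Longrightarrow> d u z + d z v = d u v" by (simp add: Iv_def)

lemma I_pred: "u \<in> V \<Longrightarrow> v \<in> V \<Longrightarrow> z \<in> Iv u v \<Longrightarrow> d u z = Suc j \<Longrightarrow> \<exists>z'\<in>Iv u v. E z' z \<and> d u z' = j"
proof -
  assume a: "u \<in> V" "v \<in> V" "z \<in> Iv u v" "d u z = Suc j"
  then have zV: "z \<in> V" by (simp add: Iv_def)
  obtain z' where z': "z' \<in> V" "E z' z" "d u z' = j" using d_pred a zV by blast
  have "d z' v \<le> d z' z + d z v" using d_tri z' zV a by blast
  then have "d z' v \<le> 1 + d z v" using d_edge z' by simp
  then have "d u z' + d z' v \<le> d u v" using a z' Iv_eq by fastforce
  moreover have "d u v \<le> d u z' + d z' v" using d_tri a z' by blast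
  ultimately have "z' \<in> Iv u v" using z' by (simp add: Iv_def)
  then show ?thesis using z' by blast
qed

lemma I_succ: "u \<in> V \<Longrightarrow> v \<in> V \<Longrightarrow> z \<in> Iv u v \<Longrightarrow> d u z < d u v \<Longrightarrow> \<exists>z'\<in>Iv u v. E z z' \<and> d u z' = Suc (d u z)"
proof -
  assume a: "u \<in> V" "v \<in> V" "z \<in> Iv u v" "d u z < d u v"
  then have zV: "z \<in> V" by (simp add: Iv_def)
  have e: "d u z + d z v = d u v" using a Iv_eq by blast
  then obtain m where m: "d v z = Suc m" using a d_sym zV by (metis add.right_neutral not0_implies_Suc not_less_iff_gr_or_eq)
  obtain z' where z': "z' \<in> V" "E z' z" "d v z' = m" using d_pred a zV m by blast
  have "d u z' \<le> d u z + 1" using d_tri[of u z z'] d_edge[of z z'] z' zV a E_sym by fastforce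
  then have "d u z' + d z' v \<le> d u v" using e m z' d_sym a zV by fastforce
  moreover have "d u v \<le> d u z' + d z' v" using d_tri a z' by blast
  ultimately have "z' \<in> Iv u v" "d u z' = Suc (d u z)" using z' e m d_sym a zV \<open>d u z' \<le> d u z + 1\<close> by (auto simp: Iv_def)
  then show ?thesis using z' E_sym by blast
qed

lemma I_trans: "u \<in> V \<Longrightarrow> v \<in> V \<Longrightarrow> z \<in> Iv u v \<Longrightarrow> z' \<in> Iv u z \<Longrightarrow> z' \<in> Iv u v"
proof -
  assume a: "u \<in> V" "v \<in> V" "z \<in> Iv u v" "z' \<in> Iv u z"
  then have V: "z \<in> V" "z' \<in> V" by (auto simp: Iv_def)
  have "d z' v \<le> d z' z + d z v" using d_tri V a by blast
  then have "d u z' + d z' v \<le> d u v" using a by (auto simp: Iv_def)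
  moreover have "d u v \<le> d u z' + d z' v" using d_tri a V by blast
  ultimately show ?thesis using V by (simp add: Iv_def)
qed

lemma I_top: "u \<in> V \<Longrightarrow> v \<in> V \<Longrightarrow> z \<in> Iv u v \<Longrightarrow> d u z = d u v \<Longrightarrow> z = v"
  using d_zero by (auto simp: Iv_def)

lemma I_bot: "u \<in> V \<Longrightarrow> z \<in> Iv u v \<Longrightarrow> d u z = 0 \<Longrightarrow> z = u"
  using d_zero by (auto simp: Iv_def)

lemma I_u: "u \<in> V \<Longrightarrow> v \<in> V \<Longrightarrow> u \<in> Iv u v" by (simp add: Iv_def)
lemma I_v: "u \<in> V \<Longrightarrow> v \<in> V \<Longrightarrow> v \<in> Iv u v" by (simp add: Iv_def)

lemma I_le: "z \<in> Iv u v \<Longrightarrow> d u z \<le> d u v" by (auto simp: Iv_def)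

lemma I_dist: "z \<in> Iv u v \<Longrightarrow> d z v = d u v - d u z" by (auto simp: Iv_def)

lemma geod_seq: "u \<in> V \<Longrightarrow> v \<in> V \<Longrightarrow> \<exists>a. (\<forall>i\<le>d u v. a i \<in> Iv u v \<and> d u (a i) = i) \<and> (\<forall>i<d u v. E (a i) (a (Suc i)))"
proof -
  assume uv: "u \<in> V" "v \<in> V"
  have main: "j \<le> d u v \<Longrightarrow> \<exists>a. (\<forall>i\<le>j. a i \<in> Iv u v \<and> d u (a i) = i) \<and> (\<forall>i<j. E (a i) (a (Suc i)))" for j
  proof (induction j)
    case 0
    have "(\<forall>i\<le>0. (\<lambda>_. u) i \<in> Iv u v \<and> d u ((\<lambda>_. u) i) = i)" using uv I_u by simp
    then show ?case by (intro exI[of _ "\<lambda>_. u"]) simp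
  next
    case (Suc j)
    then obtain a where a: "\<forall>i\<le>j. a i \<in> Iv u v \<and> d u (a i) = i" "\<forall>i<j. E (a i) (a (Suc i))" by auto
    then have aj: "a j \<in> Iv u v" "d u (a j) = j" by auto
    then have "d u (a j) < d u v" using Suc.prems by simp
    then obtain z where z: "z \<in> Iv u v" "E (a j) z" "d u z = Suc j" using I_succ[OF uv aj(1)] aj(2) by auto
    define b where "b = a(Suc j := z)"
    have b1: "\<forall>i\<le>Suc j. b i \<in> Iv u v \<and> d u (b i) = i"
    proof (intro allI impI)
      fix i assume "i \<le> Suc j"
      then consider "i \<le> j" | "i = Suc j" by linarith
      then show "b i \<in> Iv u v \<and> d u (b i) = i"
        by cases (use a z in \<open>auto simp: b_def\<close>)
    qed
    have b2: "\<forall>i<Suc j. E (b i) (b (Suc i))"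
    proof (intro allI impI)
      fix i assume "i < Suc j"
      then consider "i < j" | "i = j" by linarith
      then show "E (b i) (b (Suc i))"
        by cases (use a z in \<open>auto simp: b_def\<close>)
    qed
    show ?case using b1 b2 by blast
  qed
  show ?thesis using main[of "d u v"] by simp
qed

lemma seq_dist:
  assumes u: "u \<in> V" and a: "\<forall>i\<le>m. a i \<in> V \<and> d u (a i) = i" and e: "\<forall>i<m. E (a i) (a (Suc i))"
  shows "i \<le> j \<Longrightarrow> j \<le> m \<Longrightarrow> d (a i) (a j) = j - i"
proof -
  assume ij: "i \<le> j" "j \<le> m"
  have "d u (a j) \<le> d u (a i) + d (a i) (a j)" using d_tri u a ij by (meson le_trans)
  moreover have "d u (a j) = j" "d u (a i) = i" using a ij by auto
  ultimately have ge: "j - i \<le> d (a i) (a j)" by simp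
  have "\<forall>j'. i \<le> j' \<longrightarrow> j' \<le> m \<longrightarrow> d (a i) (a j') \<le> j' - i"
  proof
    fix j' show "i \<le> j' \<longrightarrow> j' \<le> m \<longrightarrow> d (a i) (a j') \<le> j' - i"
    proof (induction j')
      case 0 then show ?case using a by auto
    next
      case (Suc j')
      show ?case
      proof (intro impI)
        assume h: "i \<le> Suc j'" "Suc j' \<le> m"
        show "d (a i) (a (Suc j')) \<le> Suc j' - i"
        proof (cases "i = Suc j'")
          case True then show ?thesis using a h by simp
        next
          case False
          then have "i \<le> j'" using h by simp
          then have "d (a i) (a j') \<le> j' - i" using Suc h by simp
          moreover have "d (a i) (a (Suc j')) \<le> d (a i) (a j') + d (a j') (a (Suc j'))" using d_tri a h by simp
          moreover have "d (a j') (a (Suc j')) = 1" using d_edge e h by simp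
          ultimately show ?thesis using \<open>i \<le> j'\<close> by simp
        qed
      qed
    qed
  qed
  then show ?thesis using ge ij by (meson le_antisym)
qed

end

locale bgraph = sgraph +
  assumes br: "bridged V E"

context sgraph
begin

lemma two_geod_cycle:
  assumes n: "n = \<alpha> + \<beta> + 1" and ab: "\<beta> \<le> \<alpha>" "\<alpha> \<le> Suc \<beta>" "1 \<le> \<beta>"
    and a0: "a 0 = b 0"
    and ea: "\<forall>i<\<alpha>. E (a i) (a (Suc i))" and eb: "\<forall>j<\<beta>. E (b j) (b (Suc j))" and etop: "E (a \<alpha>) (b \<beta>)"
    and HA: "\<forall>i i'. i \<le> i' \<longrightarrow> i' \<le> \<alpha> \<longrightarrow> d (a i) (a i') = i' - i"
    and HB: "\<forall>j j'. j \<le> j' \<longrightarrow> j' \<le> \<beta> \<longrightarrow> d (b j) (b j') = j' - j"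
    and HX: "\<forall>i j. i \<le> \<alpha> \<longrightarrow> j \<le> \<beta> \<longrightarrow> d (a i) (b j) = min (i + j) (n - i - j)"
    and VA: "\<forall>i\<le>\<alpha>. a i \<in> V" and VB: "\<forall>j\<le>\<beta>. b j \<in> V"
  shows "isometric_cycle V E (map (\<lambda>i. if i \<le> \<alpha> then a i else b (n - i)) [0..<n])"
proof -
  define c where "c = (\<lambda>i. if i \<le> \<alpha> then a i else b (n - i))"
  have cV: "c i \<in> V" if "i < n" for i using VA VB that n unfolding c_def by auto
  have D1: "d (c i) (c j) = min (j - i) (n - (j - i))" if ij: "i \<le> j" "j < n" for i j
  proof (cases "j \<le> \<alpha>")
    case True
    then have "d (c i) (c j) = j - i" using HA ij unfolding c_def by auto
    moreover have "j - i \<le> n - (j - i)" using True n ab by linarith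
    ultimately show ?thesis by simp
  next
    case False
    note jf = False
    show ?thesis
    proof (cases "i \<le> \<alpha>")
      case True
      have "n - j \<le> \<beta>" using jf n by linarith
      then have "d (c i) (c j) = min (i + (n - j)) (n - i - (n - j))" using HX True jf unfolding c_def by auto
      moreover have "i + (n - j) = n - (j - i)" "n - i - (n - j) = j - i" using ij jf True by auto
      ultimately show ?thesis by (simp add: min.commute)
    next
      case False
      have ci: "c i = b (n - i)" "c j = b (n - j)" using False jf unfolding c_def by auto
      have le: "n - j \<le> n - i" "n - i \<le> \<beta>" using ij False n by auto
      have "d (c i) (c j) = d (b (n - j)) (b (n - i))" unfolding ci using d_sym VB le by (meson le_trans order_refl)
      also have "\<dots> = (n - i) - (n - j)" using HB le by blast
      finally have "d (c i) (c j) = j - i" using ij by simp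
      moreover have "j - i \<le> n - (j - i)" using False jf n ab ij by linarith
      ultimately show ?thesis by simp
    qed
  qed
  have D: "d (c i) (c j) = min (nat \<bar>int i - int j\<bar>) (n - nat \<bar>int i - int j\<bar>)" if "i < n" "j < n" for i j
  proof (cases "i \<le> j")
    case True
    then have "nat \<bar>int i - int j\<bar> = j - i" by simp
    then show ?thesis using D1 True that by simp
  next
    case False
    then have "nat \<bar>int i - int j\<bar> = i - j" by simp
    moreover have "d (c i) (c j) = d (c j) (c i)" using d_sym cV that by blast
    ultimately show ?thesis using D1[of j i] False that by simp
  qed
  have dist: "distinct (map c [0..<n])"
  proof (subst distinct_conv_nth, intro allI impI)
    fix i j assume h: "i < length (map c [0..<n])" "j < length (map c [0..<n])" "i \<noteq> j"
    then have "d (c i) (c j) \<noteq> 0" using D[of i j] by (simp; linarith)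
    then show "map c [0..<n] ! i \<noteq> map c [0..<n] ! j" using h cV by auto
  qed
  have edges: "E (c i) (c ((i + 1) mod n))" if i: "i < n" for i
  proof -
    consider "i < \<alpha>" | "i = \<alpha>" | "\<alpha> < i \<and> i + 1 < n" | "i + 1 = n" using i by linarith
    then show ?thesis
    proof cases
      case 1 then show ?thesis using ea n unfolding c_def by auto
    next
      case 2
      have "(i + 1) mod n = \<alpha> + 1" using 2 n ab by simp
      moreover have "n - (\<alpha> + 1) = \<beta>" using n by simp
      ultimately show ?thesis using etop 2 unfolding c_def by simp
    next
      case 3
      then have "(i + 1) mod n = i + 1" by simp
      moreover have "n - i = Suc (n - (i + 1))" using 3 by linarith
      moreover have "n - (i + 1) < \<beta>" using 3 n by linarith
      ultimately show ?thesis using eb 3 E_sym unfolding c_def by auto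
    next
      case 4
      then have "(i + 1) mod n = 0" by simp
      moreover have "\<not> i \<le> \<alpha>" using 4 n ab by linarith
      moreover have "n - i = 1" using 4 by simp
      ultimately show ?thesis using eb ab a0 E_sym unfolding c_def by auto
    qed
  qed
  have l: "length (map c [0..<n]) = n" by simp
  have nth: "map c [0..<n] ! i = c i" if "i < n" for i using that by simp
  show ?thesis unfolding c_def[symmetric] isometric_cycle_def l
  proof (intro conjI allI impI)
    show "3 \<le> n" using n ab by simp
    show "distinct (map c [0..<n])" by (rule dist)
    show "set (map c [0..<n]) \<subseteq> V" using cV by auto
    fix i assume i: "i < n"
    show "E (map c [0..<n] ! i) (map c [0..<n] ! ((i + 1) mod n))" using edges[OF i] nth i by simp
    fix j assume j: "j < n"
    show "d (map c [0..<n] ! i) (map c [0..<n] ! j) = min (nat \<bar>int i - int j\<bar>) (n - nat \<bar>int i - int j\<bar>)"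
      using D[OF i j] nth i j by simp
  qed
qed

end

context bgraph
begin

lemma two_geod_False:
  assumes n: "n = \<alpha> + \<beta> + 1" and ab: "\<beta> \<le> \<alpha>" "\<alpha> \<le> Suc \<beta>" "1 \<le> \<beta>" "4 \<le> n"
    and a0: "a 0 = b 0"
    and ea: "\<forall>i<\<alpha>. E (a i) (a (Suc i))" and eb: "\<forall>j<\<beta>. E (b j) (b (Suc j))" and etop: "E (a \<alpha>) (b \<beta>)"
    and HA: "\<forall>i i'. i \<le> i' \<longrightarrow> i' \<le> \<alpha> \<longrightarrow> d (a i) (a i') = i' - i"
    and HB: "\<forall>j j'. j \<le> j' \<longrightarrow> j' \<le> \<beta> \<longrightarrow> d (b j) (b j') = j' - j"
    and HX: "\<forall>i j. i \<le> \<alpha> \<longrightarrow> j \<le> \<beta> \<longrightarrow> d (a i) (b j) = min (i + j) (n - i - j)"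
    and VA: "\<forall>i\<le>\<alpha>. a i \<in> V" and VB: "\<forall>j\<le>\<beta>. b j \<in> V"
  shows False
proof -
  have "isometric_cycle V E (map (\<lambda>i. if i \<le> \<alpha> then a i else b (n - i)) [0..<n])"
    using two_geod_cycle[OF n ab(1-3) a0 ea eb etop HA HB HX VA VB] .
  then have "length (map (\<lambda>i. if i \<le> \<alpha> then a i else b (n - i)) [0..<n]) \<le> 3" using br unfolding bridged_def by blast
  then show False using ab by simp
qed

lemma C5_False:
  assumes e: "E a1 a2" "E a2 a3" "E a3 a4" "E a4 a5" "E a5 a1"
    and dd: "d a1 a3 = 2" "d a1 a4 = 2" "d a2 a4 = 2" "d a2 a5 = 2" "d a3 a5 = 2"
  shows False
proof -
  define a where "a = (\<lambda>i::nat. if i = 0 then a1 else if i = 1 then a2 else a3)"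
  define b where "b = (\<lambda>i::nat. if i = 0 then a1 else if i = 1 then a5 else a4)"
  have V: "a1 \<in> V" "a2 \<in> V" "a3 \<in> V" "a4 \<in> V" "a5 \<in> V" using e E_V by auto
  have d1: "d a1 a2 = 1" "d a2 a3 = 1" "d a3 a4 = 1" "d a5 a4 = 1" "d a1 a5 = 1"
    using e d_edge E_sym by auto
  have d0: "d a1 a1 = 0" "d a2 a2 = 0" "d a3 a3 = 0" "d a4 a4 = 0" "d a5 a5 = 0" using V by auto
  have ds: "d a3 a1 = 2" "d a2 a1 = 1" using dd d1 d_sym V by metis+
  have a012: "a 0 = a1" "a (Suc 0) = a2" "a 2 = a3" unfolding a_def by auto
  have b012: "b 0 = a1" "b (Suc 0) = a5" "b 2 = a4" unfolding b_def by auto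
  have c3: "i \<le> 2 \<Longrightarrow> i = 0 \<or> i = 1 \<or> i = (2::nat)" for i by auto
  have HA: "\<forall>i i'. i \<le> i' \<longrightarrow> i' \<le> 2 \<longrightarrow> d (a i) (a i') = i' - i"
  proof (intro allI impI)
    fix i i' :: nat assume h: "i \<le> i'" "i' \<le> 2"
    then show "d (a i) (a i') = i' - i"
      using c3[OF order.trans[OF h]] c3[OF h(2)] by (elim disjE) (simp_all add: a012 d0 d1 dd)
  qed
  have HB: "\<forall>i i'. i \<le> i' \<longrightarrow> i' \<le> 2 \<longrightarrow> d (b i) (b i') = i' - i"
  proof (intro allI impI)
    fix i i' :: nat assume h: "i \<le> i'" "i' \<le> 2"
    then show "d (b i) (b i') = i' - i"
      using c3[OF order.trans[OF h]] c3[OF h(2)] by (elim disjE) (simp_all add: b012 d0 d1 dd)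
  qed
  have HX: "\<forall>i j. i \<le> 2 \<longrightarrow> j \<le> 2 \<longrightarrow> d (a i) (b j) = min (i + j) (2 + 2 + 1 - i - j)"
  proof (intro allI impI)
    fix i j :: nat assume h: "i \<le> 2" "j \<le> 2"
    then show "d (a i) (b j) = min (i + j) (2 + 2 + 1 - i - j)"
      using c3[OF h(1)] c3[OF h(2)] by (elim disjE) (simp_all add: a012 b012 d0 d1 dd ds)
  qed
  have ea: "\<forall>i<2. E (a i) (a (Suc i))"
  proof (intro allI impI)
    fix i :: nat assume "i < 2" then have "i = 0 \<or> i = 1" by auto
    then show "E (a i) (a (Suc i))" using e by (auto simp: a_def)
  qed
  have eb: "\<forall>i<2. E (b i) (b (Suc i))"
  proof (intro allI impI)
    fix i :: nat assume "i < 2" then have "i = 0 \<or> i = 1" by auto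
    then show "E (b i) (b (Suc i))" using e E_sym by (auto simp: b_def)
  qed
  have VA: "\<forall>i\<le>2. a i \<in> V" using V by (auto simp: a_def)
  have VB: "\<forall>i\<le>2. b i \<in> V" using V by (auto simp: b_def)
  show False
    by (rule two_geod_False[of "2 + 2 + 1" 2 2 a b, OF refl _ _ _ _ _ ea eb _ HA HB HX VA VB])
       (simp_all add: a012 b012 e)
qed

end


context sgraph
begin

definition "TCok n \<longleftrightarrow> (\<forall>u p q. u \<in> V \<longrightarrow> E p q \<longrightarrow> d u p = d u q \<longrightarrow> 1 \<le> d u p \<longrightarrow> 2 * d u p + 1 < n \<longrightarrow>
   (\<exists>z\<in>V. E z p \<and> E z q \<and> Suc (d u z) = d u p))"

definition "CCok n \<longleftrightarrow> (\<forall>u p q y. u \<in> V \<longrightarrow> E p y \<longrightarrow> E q y \<longrightarrow> d u p = d u q \<longrightarrow> d u y = Suc (d u p) \<longrightarrow>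
   2 * d u p + 2 < n \<longrightarrow> p = q \<or> E p q)"

lemma tc: "TCok n \<Longrightarrow> u \<in> V \<Longrightarrow> E p q \<Longrightarrow> d u p = h \<Longrightarrow> d u q = h \<Longrightarrow> 1 \<le> h \<Longrightarrow> 2 * h + 1 < n \<Longrightarrow>
   \<exists>z\<in>V. E z p \<and> E z q \<and> Suc (d u z) = h"
  unfolding TCok_def apply (drule spec[of _ u], drule spec[of _ p], drule spec[of _ q]) by simp

lemma cc: "CCok n \<Longrightarrow> u \<in> V \<Longrightarrow> E p y \<Longrightarrow> E q y \<Longrightarrow> d u p = h \<Longrightarrow> d u q = h \<Longrightarrow> d u y = Suc h \<Longrightarrow>
   2 * h + 2 < n \<Longrightarrow> p = q \<or> E p q"
  unfolding CCok_def apply (drule spec[of _ u], drule spec[of _ p], drule spec[of _ q], drule spec[of _ y]) by simp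

lemma step_core:
  assumes TC: "TCok n" and CC: "CCok n" and c: "c \<in> V"
    and e1: "E q q1" and e2: "E q1 r" and h1: "d c q1 = h" and h2: "Suc (d c r) = h"
    and rk: "2 * h + 1 < n"
    and i1: "\<not> E q r" and i2: "q \<noteq> r"
    and i3: "\<And>z. z \<in> V \<Longrightarrow> E z q \<Longrightarrow> E z q1 \<Longrightarrow> E z r \<Longrightarrow> Suc (d c z) = h \<Longrightarrow> False"
  shows "d c q = Suc h"
proof -
  have V: "q \<in> V" "q1 \<in> V" "r \<in> V" using e1 e2 E_V by auto
  have up: "d c q \<le> Suc h" using lev2[OF c e1] h1 by simp
  have lo: "h \<le> Suc (d c q)" using lev1[OF c e1] h1 by simp
  have h0: "1 \<le> h" using h2 by simp
  show ?thesis
  proof (rule ccontr)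
    assume ne: "d c q \<noteq> Suc h"
    consider "Suc (d c q) = h" | "d c q = h" using up lo ne by linarith
    then show False
    proof cases
      case 1
      have "q = r \<or> E q r"
        using cc[OF CC c e1 E_sym[OF e2], of "d c q"] 1 h1 h2 rk by simp
      then show False using i1 i2 by blast
    next
      case 2
      obtain z where z: "z \<in> V" "E z q" "E z q1" "Suc (d c z) = h"
        using tc[OF TC c e1 2 h1 h0] rk by blast
      have "z = r \<or> E z r"
        using cc[OF CC c z(3) E_sym[OF e2], of "d c z"] z h1 h2 rk by simp
      then show False
      proof
        assume "z = r" then show False using z i1 E_sym by blast
      next
        assume "E z r" then show False using i3 z by blast
      qed
    qed
  qed
qed

end

locale Tconf = bgraph +
  fixes n u v w k
  assumes TC: "TCok n" and CC: "CCok n" and uV: "u \<in> V" and vw: "E v w"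
    and lv: "d u v = k" and lw: "d u w = k" and k2: "2 \<le> k" and nk: "n = 2 * k + 1"
    and nbad: "\<And>z. z \<in> V \<Longrightarrow> E z v \<Longrightarrow> E z w \<Longrightarrow> Suc (d u z) = k \<Longrightarrow> False"
begin

lemma vV: "v \<in> V" "w \<in> V" using vw E_V by auto

lemma lemA:
  assumes c: "c \<in> Iv u v" "d u c = s" "1 \<le> s"
  shows "d c w = k - s + 1"
proof -
  have cV: "c \<in> V" using c Iv_V by blast
  have sk: "s \<le> k" using I_le[OF c(1)] lv c by simp
  have cv: "d c v = k - s" using I_dist[OF c(1)] lv c by simp
  have w1: "d c w \<le> d c v + 1" using d_tri[OF cV vV(1) vV(2)] d_edge[OF vw] by simp
  have w2: "k \<le> s + d c w" using d_tri[OF uV cV vV(2)] lw c by simp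
  show ?thesis
  proof (rule ccontr)
    assume ne: "d c w \<noteq> k - s + 1"
    then have eq: "d c w = k - s" using w1 w2 cv by linarith
    show False
    proof (cases "k - s = 0")
      case True
      then have "c = v" "c = w" using d_zero cV vV cv eq by auto
      then show False using vw E_irr by simp
    next
      case False
      have rk: "2 * (k - s) + 1 < n" using nk c(3) sk by linarith
      obtain z where z: "z \<in> V" "E z v" "E z w" "Suc (d c z) = k - s"
        using tc[OF TC cV vw cv eq _ rk] False by auto
      have "d u z \<le> d u c + d c z" using d_tri uV cV z(1) by blast
      then have a1: "Suc (d u z) \<le> k" using z(4) c sk by linarith
      have a2: "k \<le> Suc (d u z)" using lev1[OF uV z(2)] lv by simp
      show False using nbad[OF z(1-3)] a1 a2 by linarith
    qed
  qed
qed

lemma regT: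
  assumes c: "c \<in> Iv u v" "d u c = s" "1 \<le> s"
  shows "m < s \<Longrightarrow> q \<in> Iv u w \<Longrightarrow> d u q = k - m \<Longrightarrow> d c q = k - s + 1 + m"
proof (induction m arbitrary: q rule: less_induct)
  case (less m q)
  have cV: "c \<in> V" using c Iv_V by blast
  have sk: "s \<le> k" using I_le[OF c(1)] lv c by simp
  have cv: "d c v = k - s" using I_dist[OF c(1)] lv c by simp
  have qV: "q \<in> V" using less.prems Iv_V by blast
  show ?case
  proof (cases "m = 0")
    case True
    then have "q = w" using I_top[OF uV vV(2) less.prems(2)] less.prems(3) lw by simp
    then show ?thesis using lemA[OF c] True by simp
  next
    case False
    have tk: "d u q < d u w" using less.prems False lw sk by linarith
    obtain q1 where q1: "q1 \<in> Iv u w" "E q q1" "d u q1 = Suc (d u q)"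
      using I_succ[OF uV vV(2) less.prems(2) tk] by blast
    have q1l: "d u q1 = k - (m - 1)" using q1 less.prems False sk by linarith
    have IH1: "d c q1 = k - s + 1 + (m - 1)" using less.IH[of "m - 1" q1] False less.prems q1 q1l by simp
    define h where "h = k - s + m"
    have h1: "d c q1 = h" using IH1 False h_def by simp
    have rk: "2 * h + 1 < n" using nk h_def less.prems sk by linarith
    show ?thesis
    proof (cases "m = 1")
      case True
      have q1w: "q1 = w" using I_top[OF uV vV(2) q1(1)] q1l True lw by simp
      have ql: "d u q = k - 1" using less.prems True by simp
      have eqw: "E q w" using q1 q1w by simp
      have i1: "\<not> E q v" using nbad[of q] qV E_sym eqw ql k2 by fastforce
      have i2: "q \<noteq> v" using ql lv k2 by auto
      have i3: "False" if z: "z \<in> V" "E z q" "E z q1" "E z v" "Suc (d c z) = h" for z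
      proof -
        have ezw: "E z w" using z q1w by simp
        have lz1: "k \<le> Suc (d u z)" using lev1[OF uV z(4)] lv by simp
        have lz2: "d u z \<le> Suc (d u q)" using lev1[OF uV E_sym[OF z(2)]] by simp
        show False
        proof (cases "Suc (d u z) = k")
          case True then show False using nbad z ezw by blast
        next
          case False
          then have lz: "d u z = k" using lz1 lz2 ql k2 by linarith
          have czv: "d c z = k - s" using z(5) h_def \<open>m = 1\<close> by simp
          show False
          proof (cases "k - s = 0")
            case True
            then have "c = v" "c = z" using d_zero cV vV z(1) cv czv by auto
            then show False using z(4) E_irr by simp
          next
            case False
            have rk2: "2 * (k - s) + 1 < n" using nk c(3) sk by linarith
            obtain z3 where z3: "z3 \<in> V" "E z3 v" "E z3 z" "Suc (d c z3) = k - s"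
              using tc[OF TC cV E_sym[OF z(4)] cv czv _ rk2] False by auto
            have "d u z3 \<le> d u c + d c z3" using d_tri uV cV z3(1) by blast
            then have "Suc (d u z3) \<le> k" using z3(4) c sk by linarith
            moreover have "k \<le> Suc (d u z3)" using lev1[OF uV z3(2)] lv by simp
            ultimately have lz3: "d u z3 = k - 1" by linarith
            have "z3 = q \<or> E z3 q"
              using cc[OF CC uV z3(3) E_sym[OF z(2)] lz3 ql] lz k2 nk by auto
            then show False
            proof
              assume "z3 = q" then show False using i1 z3(2) by simp
            next
              assume e3: "E z3 q"
              have dvw: "d v w = 1" using d_edge vw by simp
              have dvz3: "d v z3 = 1" using d_edge E_sym z3(2) by blast
              have "\<not> E v q" using i1 E_sym by blast
              then have dvq: "d v q = Suc 1" using d_two[OF vw E_sym[OF eqw] i2[symmetric]] by simp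
              have "w = z3 \<or> E w z3"
                using cc[OF CC vV(1) E_sym[OF eqw] e3 dvw dvz3 dvq] nk k2 by auto
              then show False
              proof
                assume "w = z3" then show False using lz3 lw k2 by simp
              next
                assume "E w z3" then show False using nbad[OF z3(1) z3(2)] E_sym lz3 k2 by fastforce
              qed
            qed
          qed
        qed
      qed
      have "d c q = Suc h"
        by (rule step_core[OF TC CC cV q1(2) _ h1 _ rk i1 i2 i3])
           (use q1w vw E_sym cv h_def True in auto)
      then show ?thesis using h_def True by simp
    next
      case False
      then have m2: "2 \<le> m" using \<open>m \<noteq> 0\<close> by simp
      have tk1: "d u q1 < d u w" using q1l lw m2 less.prems sk by linarith
      obtain r where r: "r \<in> Iv u w" "E q1 r" "d u r = Suc (d u q1)"
        using I_succ[OF uV vV(2) q1(1) tk1] by blast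
      have rl: "d u r = k - (m - 2)" using r q1l m2 less.prems sk by linarith
      have IH2: "d c r = k - s + 1 + (m - 2)" using less.IH[of "m - 2" r] m2 less.prems r rl by simp
      have h2: "Suc (d c r) = h" using IH2 h_def m2 less.prems sk by linarith
      have i1: "\<not> E q r" using lev1[OF uV, of q r] r q1 by auto
      have i2: "q \<noteq> r" using r q1 by auto
      have i3: "False" if z: "z \<in> V" "E z q" "E z q1" "E z r" "Suc (d c z) = h" for z
      proof -
        have "d u r \<le> Suc (d u z)" using lev1[OF uV z(4)] by simp
        moreover have "d u z \<le> Suc (d u q)" using lev1[OF uV E_sym[OF z(2)]] by simp
        ultimately have lz: "d u z = d u q1" using r q1 by simp
        have rV: "r \<in> V" using r Iv_V by blast
        have "d z w \<le> d z r + d r w" using d_tri z(1) rV vV by blast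
        moreover have "d z r = 1" using d_edge z(4) by simp
        moreover have "d r w = k - d u r" using I_dist[OF r(1)] lw by simp
        ultimately have "d u z + d z w \<le> d u w" using lz r lw rl m2 less.prems sk by linarith
        moreover have "d u w \<le> d u z + d z w" using d_tri uV z(1) vV by blast
        ultimately have zI: "z \<in> Iv u w" using z(1) by (simp add: Iv_def)
        have "d c z = k - s + 1 + (m - 1)" using less.IH[of "m - 1" z] zI lz q1l less.prems m2 by simp
        then show False using z(5) h_def m2 by linarith
      qed
      have "d c q = Suc h" by (rule step_core[OF TC CC cV q1(2) r(2) h1 h2 rk i1 i2 i3])
      then show ?thesis using h_def by simp
    qed
  qed
qed

lemma regU_aux: "\<forall>c q. c \<in> Iv u v \<longrightarrow> q \<in> Iv u w \<longrightarrow> d u c + d u q = N \<longrightarrow> N \<le> k \<longrightarrow> d c q = N"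
proof (induction N rule: less_induct)
  case (less N)
  show ?case
  proof (intro allI impI)
    fix c q assume h: "c \<in> Iv u v" "q \<in> Iv u w" "d u c + d u q = N" "N \<le> k"
    define s where "s = d u c"
    define t where "t = d u q"
    have cV: "c \<in> V" and qV: "q \<in> V" using h Iv_V by auto
    have sk: "s \<le> k" "t \<le> k" using I_le h lv lw s_def t_def by fastforce+
    have cv: "d c v = k - s" using I_dist[OF h(1)] lv s_def by simp
    have qw: "d q w = k - t" using I_dist[OF h(2)] lw t_def by simp
    have up: "d c q \<le> N" using d_tri[OF cV uV qV] d_sym[OF cV uV] h s_def t_def by simp
    show "d c q = N"
    proof (cases "s = 0")
      case True
      then have "c = u" using I_bot[OF uV h(1)] s_def by simp
      then show ?thesis using h True s_def by simp
    next
      case False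
      note s0 = False
      show ?thesis
      proof (cases "t = 0")
        case True
        then have "q = u" using I_bot[OF uV h(2)] t_def by simp
        then show ?thesis using h True s_def t_def d_sym[OF cV uV] by simp
      next
        case False
        note t0 = False
        obtain c1 where c1: "c1 \<in> Iv u v" "E c1 c" "d u c1 = s - 1"
          using I_pred[OF uV vV(1) h(1), of "s - 1"] s0 s_def by auto
        have c1V: "c1 \<in> V" using c1 Iv_V by blast
        have IH1: "d c1 q = N - 1" using less.IH[of "N - 1"] c1 h s0 s_def t_def by auto
        have "d c1 q \<le> d c1 c + d c q" using d_tri c1V cV qV by blast
        then have lo: "N \<le> Suc (Suc (d c q))" using IH1 d_edge[OF c1(2)] by linarith
        have N2: "2 \<le> N" using s0 t0 h s_def t_def by linarith
        have dqc1: "d q c1 = N - 1" using IH1 d_sym c1V qV by simp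
        show ?thesis
        proof (rule ccontr)
          assume ne: "d c q \<noteq> N"
          have dqc: "d q c = d c q" using d_sym cV qV by simp
          consider "Suc (Suc (d c q)) = N" | "Suc (d c q) = N" using ne lo up by linarith
          then show False
          proof cases
            case 1
            show False
            proof (cases "s = 1")
              case True
              have "d u c + d c q = d u q" using 1 True h s_def t_def by linarith
              then have "c \<in> Iv u q" using cV by (simp add: Iv_def)
              then have "c \<in> Iv u w" using I_trans[OF uV vV(2) h(2)] by blast
              then have "d c w = k - 1" using I_dist lw True s_def by simp
              moreover have "d c w = k - 1 + 1" using lemA[OF h(1), of 1] True s_def by simp
              ultimately show False by simp
            next
              case False
              have ss: "d u c1 = Suc (s - 2)" using c1(3) s0 False by linarith
              obtain c2 where c2: "c2 \<in> Iv u v" "E c2 c1" "d u c2 = s - 2"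
                using I_pred[OF uV vV(1) c1(1) ss] by blast
              have c2V: "c2 \<in> V" using c2 Iv_V by blast
              have IH2: "d c2 q = N - 2" using less.IH[of "N - 2"] c2 h s0 False s_def t_def N2 by auto
              have "c = c2 \<or> E c c2"
                using cc[OF CC qV E_sym[OF c1(2)] c2(2), of "N - 2"] dqc 1 IH2 d_sym[OF c2V qV] dqc1 nk h
                by auto
              then show False using lev2[OF uV, of c c2] c2 s_def s0 False by auto
            qed
          next
            case 2
            have rk: "2 * (N - 1) + 1 < n" using nk h N2 by linarith
            obtain z where z: "z \<in> V" "E z c" "E z c1" "Suc (d q z) = N - 1"
              using tc[OF TC qV E_sym[OF c1(2)], of "N - 1"] dqc 2 dqc1 N2 rk by auto
            show False
            proof (cases "s = 1")
              case True
              then have c1u: "c1 = u" using I_bot[OF uV c1(1)] c1 by simp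
              have duz: "d u z = 1" using d_edge E_sym z(3) c1u by blast
              have "d u z + d z q = d u q" using duz z(4) d_sym[OF z(1) qV] h True s_def t_def by linarith
              then have "z \<in> Iv u q" using z(1) by (simp add: Iv_def)
              then have zI: "z \<in> Iv u w" using I_trans[OF uV vV(2) h(2)] by blast
              show False
              proof (cases "t = 1")
                case False
                have "d c z = 2" using less.IH[of 2] h(1) zI duz True s_def t_def h k2 False t0 by auto
                then show False using d_edge E_sym z(2) by fastforce
              next
                case True
                have "d q z = 0" using z(4) 2 \<open>s = 1\<close> h s_def t_def True by linarith
                then have "z = q" using d_zero qV z(1) by blast
                then have eqc: "E q c" using z(2) by simp
                have dcw: "d c w = k" using lemA[OF h(1), of 1] \<open>s = 1\<close> s_def k2 by simp
                have dqw: "d q w = Suc (k - 2)" using qw True k2 by simp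
                obtain q' where q': "q' \<in> Iv q w" "E q' w" "d q q' = k - 2"
                  using I_pred[OF qV vV(2) I_v[OF qV vV(2)] dqw] by blast
                have q'V: "q' \<in> V" using q' Iv_V by blast
                have "d c q' \<le> d c q + d q q'" using d_tri cV qV q'V by blast
                moreover have "d c q = 1" using d_edge E_sym eqc by blast
                moreover have "d c w \<le> d c q' + d q' w" using d_tri cV q'V vV by blast
                moreover have "d q' w = 1" using d_edge q'(2) by simp
                ultimately have dcq': "d c q' = k - 1" using dcw q' k2 by linarith
                have "d u q' \<le> d u q + d q q'" using d_tri uV qV q'V by blast
                then have "Suc (d u q') \<le> k" using q' True t_def k2 by linarith
                moreover have "k \<le> Suc (d u q')" using lev1[OF uV q'(2)] lw by simp
                ultimately have luq': "d u q' = k - 1" by linarith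
                have dcv: "d c v = k - 1" using cv \<open>s = 1\<close> by simp
                have "v = q' \<or> E v q'"
                  using cc[OF CC cV vw q'(2) dcv dcq'] dcw k2 nk by auto
                then show False
                proof
                  assume "v = q'" then show False using luq' lv k2 by simp
                next
                  assume "E v q'" then show False using nbad[OF q'V _ q'(2)] E_sym luq' k2 by fastforce
                qed
              qed
            next
              case False
              have ss: "d u c1 = Suc (s - 2)" using c1(3) s0 False by linarith
              obtain c2 where c2: "c2 \<in> Iv u v" "E c2 c1" "d u c2 = s - 2"
                using I_pred[OF uV vV(1) c1(1) ss] by blast
              have c2V: "c2 \<in> V" using c2 Iv_V by blast
              have IH2: "d c2 q = N - 2" using less.IH[of "N - 2"] c2 h s0 False s_def t_def N2 by auto
              have "z = c2 \<or> E z c2"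
                using cc[OF CC qV z(3) c2(2), of "N - 2"] z(4) IH2 d_sym[OF c2V qV] dqc1 nk h N2
                by auto
              then show False
              proof
                assume "z = c2" then show False using lev1[OF uV z(2)] c2 s_def s0 False by auto
              next
                assume ez2: "E z c2"
                have "d u c \<le> Suc (d u z)" using lev1[OF uV z(2)] by simp
                moreover have "d u z \<le> Suc (d u c2)" using lev1[OF uV E_sym[OF ez2]] by simp
                ultimately have lz: "d u z = s - 1" using c2 s_def s0 False by linarith
                have "d z v \<le> d z c + d c v" using d_tri z(1) cV vV by blast
                then have "d u z + d z v \<le> d u v" using d_edge[OF z(2)] cv lz lv sk s0 by linarith
                moreover have "d u v \<le> d u z + d z v" using d_tri uV z(1) vV by blast
                ultimately have zI: "z \<in> Iv u v" using z(1) by (simp add: Iv_def)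
                have "d z q = N - 1" using less.IH[of "N - 1"] zI h lz s0 s_def t_def by auto
                then show False using z(4) d_sym[OF z(1) qV] by linarith
              qed
            qed
          qed
        qed
      qed
    qed
  qed
qed

lemma claimT:
  assumes c: "c \<in> Iv u v" and q: "q \<in> Iv u w"
  shows "d c q = min (d u c + d u q) (n - d u c - d u q)"
proof -
  have sk: "d u c \<le> k" "d u q \<le> k" using I_le c q lv lw by fastforce+
  show ?thesis
  proof (cases "d u c + d u q \<le> k")
    case True
    then have "d c q = d u c + d u q" using regU_aux c q by blast
    then show ?thesis using True nk by simp
  next
    case False
    have "d c q = k - d u c + 1 + (k - d u q)"
      using regT[OF c refl, of "k - d u q" q] False q sk by simp
    then show ?thesis using False nk sk by simp
  qed
qed

lemma T_False: False
proof -
  obtain a where a: "\<forall>i\<le>d u v. a i \<in> Iv u v \<and> d u (a i) = i" "\<forall>i<d u v. E (a i) (a (Suc i))"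
    using geod_seq[OF uV vV(1)] by blast
  obtain b where b: "\<forall>i\<le>d u w. b i \<in> Iv u w \<and> d u (b i) = i" "\<forall>i<d u w. E (b i) (b (Suc i))"
    using geod_seq[OF uV vV(2)] by blast
  have a0: "a 0 = u" "b 0 = u" using a b I_bot[OF uV] by auto
  have ak: "a k = v" "b k = w" using a b I_top[OF uV] lv lw vV by auto
  have VA: "\<forall>i\<le>k. a i \<in> V" and VB: "\<forall>i\<le>k. b i \<in> V" using a b lv lw Iv_V by auto
  have A': "\<forall>i\<le>k. a i \<in> V \<and> d u (a i) = i" using a lv Iv_V by auto
  have A2: "\<forall>i<k. E (a i) (a (Suc i))" using a lv by auto
  have B': "\<forall>i\<le>k. b i \<in> V \<and> d u (b i) = i" using b lw Iv_V by auto
  have B2: "\<forall>i<k. E (b i) (b (Suc i))" using b lw by auto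
  have HA: "\<forall>i i'. i \<le> i' \<longrightarrow> i' \<le> k \<longrightarrow> d (a i) (a i') = i' - i"
    using seq_dist[OF uV A' A2] by auto
  have HB: "\<forall>i i'. i \<le> i' \<longrightarrow> i' \<le> k \<longrightarrow> d (b i) (b i') = i' - i"
    using seq_dist[OF uV B' B2] by auto
  have HX: "\<forall>i j. i \<le> k \<longrightarrow> j \<le> k \<longrightarrow> d (a i) (b j) = min (i + j) (n - i - j)"
    using claimT a b lv lw by auto
  show False
    by (rule two_geod_False[of n k k a b, OF _ _ _ _ _ _ _ _ _ HA HB HX VA VB])
       (use nk k2 a0 ak a b lv lw vw in auto)
qed

end


locale Cconf = bgraph +
  fixes n u x y k
  assumes TC: "TCok n" and CC: "CCok n" and uV: "u \<in> V"
    and lx: "d u x = k" and ly: "d u y = Suc k" and xy: "E x y" and k1: "1 \<le> k" and nk: "n = 2 * k + 2"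
begin

lemma xyV: "x \<in> V" "y \<in> V" using xy E_V by auto

lemma Z0:
  assumes k2: "2 \<le> k" and t: "E x' y" "x' \<noteq> x" "\<not> E x x'"
    and z: "z \<in> V" "E z x" "E z x'" "Suc (d u z) = k"
  shows False
proof -
  have "d u y \<le> d u z + d z y" using d_tri uV z(1) xyV by blast
  then have "2 \<le> d z y" using ly z(4) by simp
  moreover have "d z y \<le> 2" using d_le2[OF z(2) xy] .
  ultimately have dzy: "d z y = Suc 1" by simp
  have "x = x' \<or> E x x'"
    using cc[OF CC z(1) xy t(1) d_edge[OF z(2)] d_edge[OF z(3)] dzy] nk k2 by simp
  then show False using t by blast
qed

lemma LZ:
  assumes k2: "2 \<le> k" and t: "d u x' = k" "E x' y" "x' \<noteq> x" "\<not> E x x'"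
    and z: "z \<in> V" "d u z = k" "E z x" "E z x'"
  shows False
proof -
  have x'V: "x' \<in> V" using t E_V by blast
  obtain z1 where z1: "z1 \<in> V" "E z1 x" "E z1 z" "Suc (d u z1) = k"
    using tc[OF TC uV E_sym[OF z(3)] lx z(2)] k1 nk by auto
  obtain z2 where z2: "z2 \<in> V" "E z2 z" "E z2 x'" "Suc (d u z2) = k"
    using tc[OF TC uV z(4) z(2) t(1)] k1 nk by auto
  have l1: "d u z1 = k - 1" and l2: "d u z2 = k - 1" using z1 z2 by auto
  have "z1 = z2 \<or> E z1 z2"
    using cc[OF CC uV z1(3) z2(2) l1 l2] z(2) k2 nk by auto
  then show False
  proof
    assume "z1 = z2" then show False using Z0[OF k2 t(2-4) z1(1) z1(2)] z2 by blast
  next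
    assume e12: "E z1 z2"
    have n1: "\<not> E z1 x'" using Z0[OF k2 t(2-4) z1(1) z1(2) _ z1(4)] by blast
    have n2: "\<not> E x z2" using Z0[OF k2 t(2-4) z2(1) E_sym _ z2(4)] z2(3) by blast
    have "d u y \<le> d u z1 + d z1 y" using d_tri uV z1(1) xyV by blast
    then have "2 \<le> d z1 y" using ly z1(4) by simp
    moreover have "d z1 y \<le> 2" using d_le2[OF z1(2) xy] .
    ultimately have d1: "d z1 y = 2" by simp
    have "z1 \<noteq> x'" using t(1) z1(4) by auto
    then have d2: "d z1 x' = 2" using d_two[OF e12 z2(3) _ n1] by blast
    have d3: "d x x' = 2" using d_two[OF xy E_sym[OF t(2)] t(3)[symmetric] t(4)] .
    have "x \<noteq> z2" using lx z2(4) by auto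
    then have d4: "d x z2 = 2" using d_two[OF E_sym[OF z1(2)] e12 _ n2] by blast
    have "d u y \<le> d u z2 + d z2 y" using d_tri uV z2(1) xyV by blast
    then have "2 \<le> d y z2" using ly z2(4) d_sym z2(1) xyV by simp
    moreover have "d y z2 \<le> 2" using d_le2[OF E_sym[OF t(2)] E_sym[OF z2(3)]] .
    ultimately have d5: "d y z2 = 2" by simp
    show False
      using C5_False[OF z1(2) xy E_sym[OF t(2)] E_sym[OF z2(3)] E_sym[OF e12] d1 d2 d3 d4 d5] .
  qed
qed

lemma A_y: "c \<in> Iv u x \<Longrightarrow> d c y = Suc k - d u c"
proof -
  assume c: "c \<in> Iv u x"
  have cV: "c \<in> V" using c Iv_V by blast
  have "d c y \<le> d c x + d x y" using d_tri cV xyV by blast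
  moreover have "d c x = k - d u c" using I_dist[OF c] lx by simp
  moreover have "d u y \<le> d u c + d c y" using d_tri uV cV xyV by blast
  moreover have "d u c \<le> k" using I_le[OF c] lx by simp
  ultimately show ?thesis using d_edge[OF xy] ly by linarith
qed

lemma lemAC:
  assumes t: "d u x' = k" "E x' y" "x' \<noteq> x" "\<not> E x x'"
    and c: "c \<in> Iv u x" "d u c = s" "1 \<le> s"
  shows "d c x' = k + 2 - s"
proof -
  have cV: "c \<in> V" using c Iv_V by blast
  have x'V: "x' \<in> V" using t E_V by blast
  have sk: "s \<le> k" using I_le[OF c(1)] lx c by simp
  have cx: "d c x = k - s" using I_dist[OF c(1)] lx c by simp
  have cy: "d c y = k + 1 - s" using A_y[OF c(1)] c by simp
  have up: "d c x' \<le> Suc (d c y)" using lev1[OF cV t(2)[THEN E_sym]] .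
  have lo: "d c y \<le> Suc (d c x')" using lev1[OF cV t(2)] .
  show ?thesis
  proof (rule ccontr)
    assume ne: "d c x' \<noteq> k + 2 - s"
    consider "d c x' = k - s" | "d c x' = k + 1 - s" using ne up lo cy sk by linarith
    then show False
    proof cases
      case 1
      have "x = x' \<or> E x x'"
        using cc[OF CC cV xy t(2) cx 1] cy sk c(3) nk by simp
      then show False using t by blast
    next
      case 2
      show False
      proof (cases "s = k")
        case True
        then have "c = x" using d_zero cV xyV cx by simp
        then have "E x x'" using d_one 2 True xyV x'V by simp
        then show False using t by blast
      next
        case False
        then have k2: "2 \<le> k" using c sk by linarith
        have rk: "2 * (k + 1 - s) + 1 < n" using nk c(3) by linarith
        have h1: "1 \<le> k + 1 - s" using sk by simp
        obtain z where z: "z \<in> V" "E z y" "E z x'" "Suc (d c z) = k + 1 - s"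
          using tc[OF TC cV E_sym[OF t(2)] cy 2 h1 rk] by blast
        have dcz: "d c z = k - s" using z(4) by simp
        have "z = x \<or> E z x" using cc[OF CC cV z(2) xy dcz cx] cy sk c(3) nk by simp
        then show False
        proof
          assume "z = x" then show False using z(3) t by blast
        next
          assume ezx: "E z x"
          have "d u y \<le> Suc (d u z)" using lev1[OF uV z(2)] .
          moreover have "d u z \<le> d u c + d c z" using d_tri uV cV z(1) by blast
          ultimately have "d u z = k" using ly dcz c sk by linarith
          then show False using LZ[OF k2 t z(1) _ ezx z(3)] by blast
        qed
      qed
    qed
  qed
qed

end
locale Cconf2 = Cconf +
  fixes x'
  assumes t1: "d u x' = k" and t2: "E x' y" and t3: "x' \<noteq> x" and t4: "\<not> E x x'"
begin

lemma x'V: "x' \<in> V" using t2 E_V by blast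

lemma regTC:
  assumes c: "c \<in> Iv u x" "d u c = s" "1 \<le> s"
  shows "m < s \<Longrightarrow> q \<in> Iv u x' \<Longrightarrow> d u q = k - m \<Longrightarrow> d c q = k + 2 - s + m"
proof (induction m arbitrary: q rule: less_induct)
  case (less m q)
  have cV: "c \<in> V" using c Iv_V by blast
  have sk: "s \<le> k" using I_le[OF c(1)] lx c by simp
  have cy: "d c y = k + 1 - s" using A_y[OF c(1)] c by simp
  have qV: "q \<in> V" using less.prems Iv_V by blast
  show ?case
  proof (cases "m = 0")
    case True
    then have "q = x'" using I_top[OF uV x'V less.prems(2)] less.prems(3) t1 by simp
    then show ?thesis using lemAC[OF t1 t2 t3 t4 c] True by simp
  next
    case False
    have tk: "d u q < d u x'" using less.prems False t1 sk by linarith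
    obtain q1 where q1: "q1 \<in> Iv u x'" "E q q1" "d u q1 = Suc (d u q)"
      using I_succ[OF uV x'V less.prems(2) tk] by blast
    have q1l: "d u q1 = k - (m - 1)" using q1 less.prems False sk by linarith
    have IH1: "d c q1 = k + 2 - s + (m - 1)" using less.IH[of "m - 1" q1] False less.prems q1 q1l by simp
    define h where "h = k + 1 - s + m"
    have h1: "d c q1 = h" using IH1 False h_def sk by simp
    have rk: "2 * h + 1 < n" using nk h_def less.prems sk by linarith
    show ?thesis
    proof (cases "m = 1")
      case True
      have q1w: "q1 = x'" using I_top[OF uV x'V q1(1)] q1l True t1 by simp
      have ql: "d u q = k - 1" using less.prems True by simp
      have k2: "2 \<le> k" using True less.prems sk by linarith
      have i1: "\<not> E q y" using lev1[OF uV, of q y] ql ly k2 by auto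
      have i2: "q \<noteq> y" using ql ly by auto
      have i3: "False" if z: "z \<in> V" "E z q" "E z q1" "E z y" "Suc (d c z) = h" for z
      proof -
        have "d u y \<le> Suc (d u z)" using lev1[OF uV z(4)] .
        moreover have "d u z \<le> Suc (d u q)" using lev1[OF uV E_sym[OF z(2)]] .
        ultimately have lz: "d u z = k" using ly ql k2 by linarith
        have ezx': "E z x'" using z q1w by simp
        show False
        proof (cases "E z x")
          case True then show False using LZ[OF k2 t1 t2 t3 t4 z(1) lz True ezx'] by blast
        next
          case False
          have zx: "z \<noteq> x" using ezx' t4 by blast
          have nxz: "\<not> E x z" using False E_sym by blast
          have "d c z = k + 2 - s" using lemAC[OF lz z(4) zx nxz c] .
          then show False using z(5) h_def True sk by linarith
        qed
      qed
      have h2: "Suc (d c y) = h" using cy h_def True sk by linarith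
      have "d c q = Suc h"
        by (rule step_core[OF TC CC cV q1(2) _ h1 h2 rk i1 i2 i3]) (use q1w t2 in auto)
      then show ?thesis using h_def True sk by simp
    next
      case False
      then have m2: "2 \<le> m" using \<open>m \<noteq> 0\<close> by simp
      have tk1: "d u q1 < d u x'" using q1l t1 m2 less.prems sk by linarith
      obtain r where r: "r \<in> Iv u x'" "E q1 r" "d u r = Suc (d u q1)"
        using I_succ[OF uV x'V q1(1) tk1] by blast
      have rl: "d u r = k - (m - 2)" using r q1l m2 less.prems sk by linarith
      have IH2: "d c r = k + 2 - s + (m - 2)" using less.IH[of "m - 2" r] m2 less.prems r rl by simp
      have h2: "Suc (d c r) = h" using IH2 h_def m2 less.prems sk by linarith
      have i1: "\<not> E q r" using lev1[OF uV, of q r] r q1 by auto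
      have i2: "q \<noteq> r" using r q1 by auto
      have i3: "False" if z: "z \<in> V" "E z q" "E z q1" "E z r" "Suc (d c z) = h" for z
      proof -
        have "d u r \<le> Suc (d u z)" using lev1[OF uV z(4)] by simp
        moreover have "d u z \<le> Suc (d u q)" using lev1[OF uV E_sym[OF z(2)]] by simp
        ultimately have lz: "d u z = d u q1" using r q1 by simp
        have rV: "r \<in> V" using r Iv_V by blast
        have "d z x' \<le> d z r + d r x'" using d_tri z(1) rV x'V by blast
        moreover have "d z r = 1" using d_edge z(4) by simp
        moreover have "d r x' = k - d u r" using I_dist[OF r(1)] t1 by simp
        ultimately have "d u z + d z x' \<le> d u x'" using lz r t1 rl m2 less.prems sk by linarith
        moreover have "d u x' \<le> d u z + d z x'" using d_tri uV z(1) x'V by blast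
        ultimately have zI: "z \<in> Iv u x'" using z(1) by (simp add: Iv_def)
        have "d c z = k + 2 - s + (m - 1)" using less.IH[of "m - 1" z] zI lz q1l less.prems m2 by simp
        then show False using z(5) h_def m2 sk by linarith
      qed
      have "d c q = Suc h" by (rule step_core[OF TC CC cV q1(2) r(2) h1 h2 rk i1 i2 i3])
      then show ?thesis using h_def sk by simp
    qed
  qed
qed

lemma regUC_aux: "\<forall>c q. c \<in> Iv u x \<longrightarrow> q \<in> Iv u x' \<longrightarrow> d u c + d u q = N \<longrightarrow> N \<le> k \<longrightarrow> d c q = N"
proof (induction N rule: less_induct)
  case (less N)
  show ?case
  proof (intro allI impI)
    fix c q assume h: "c \<in> Iv u x" "q \<in> Iv u x'" "d u c + d u q = N" "N \<le> k"
    define s where "s = d u c"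
    define t where "t = d u q"
    have cV: "c \<in> V" and qV: "q \<in> V" using h Iv_V by auto
    have sk: "s \<le> k" "t \<le> k" using I_le h lx t1 s_def t_def by fastforce+
    have cv: "d c x = k - s" using I_dist[OF h(1)] lx s_def by simp
    have qw: "d q x' = k - t" using I_dist[OF h(2)] t1 t_def by simp
    have up: "d c q \<le> N" using d_tri[OF cV uV qV] d_sym[OF cV uV] h s_def t_def by simp
    show "d c q = N"
    proof (cases "s = 0")
      case True
      then have "c = u" using I_bot[OF uV h(1)] s_def by simp
      then show ?thesis using h True s_def by simp
    next
      case False
      note s0 = False
      show ?thesis
      proof (cases "t = 0")
        case True
        then have "q = u" using I_bot[OF uV h(2)] t_def by simp
        then show ?thesis using h True s_def t_def d_sym[OF cV uV] by simp
      next
        case False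
        note t0 = False
        obtain c1 where c1: "c1 \<in> Iv u x" "E c1 c" "d u c1 = s - 1"
          using I_pred[OF uV xyV(1) h(1), of "s - 1"] s0 s_def by auto
        have c1V: "c1 \<in> V" using c1 Iv_V by blast
        have IH1: "d c1 q = N - 1" using less.IH[of "N - 1"] c1 h s0 s_def t_def by auto
        have "d c1 q \<le> d c1 c + d c q" using d_tri c1V cV qV by blast
        then have lo: "N \<le> Suc (Suc (d c q))" using IH1 d_edge[OF c1(2)] by linarith
        have N2: "2 \<le> N" using s0 t0 h s_def t_def by linarith
        have dqc1: "d q c1 = N - 1" using IH1 d_sym c1V qV by simp
        show ?thesis
        proof (rule ccontr)
          assume ne: "d c q \<noteq> N"
          have dqc: "d q c = d c q" using d_sym cV qV by simp
          consider "Suc (Suc (d c q)) = N" | "Suc (d c q) = N" using ne lo up by linarith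
          then show False
          proof cases
            case 1
            show False
            proof (cases "s = 1")
              case True
              have "d u c + d c q = d u q" using 1 True h s_def t_def by linarith
              then have "c \<in> Iv u q" using cV by (simp add: Iv_def)
              then have "c \<in> Iv u x'" using I_trans[OF uV x'V h(2)] by blast
              then have "d c x' = k - 1" using I_dist t1 True s_def by simp
              moreover have "d c x' = k + 2 - 1" using lemAC[OF t1 t2 t3 t4 h(1), of 1] True s_def by simp
              ultimately show False using k1 by simp
            next
              case False
              have ss: "d u c1 = Suc (s - 2)" using c1(3) s0 False by linarith
              obtain c2 where c2: "c2 \<in> Iv u x" "E c2 c1" "d u c2 = s - 2"
                using I_pred[OF uV xyV(1) c1(1) ss] by blast
              have c2V: "c2 \<in> V" using c2 Iv_V by blast
              have IH2: "d c2 q = N - 2" using less.IH[of "N - 2"] c2 h s0 False s_def t_def N2 by auto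
              have "c = c2 \<or> E c c2"
                using cc[OF CC qV E_sym[OF c1(2)] c2(2), of "N - 2"] dqc 1 IH2 d_sym[OF c2V qV] dqc1 nk h
                by auto
              then show False using lev2[OF uV, of c c2] c2 s_def s0 False by auto
            qed
          next
            case 2
            have rk: "2 * (N - 1) + 1 < n" using nk h N2 by linarith
            obtain z where z: "z \<in> V" "E z c" "E z c1" "Suc (d q z) = N - 1"
              using tc[OF TC qV E_sym[OF c1(2)], of "N - 1"] dqc 2 dqc1 N2 rk by auto
            show False
            proof (cases "s = 1")
              case True
              then have c1u: "c1 = u" using I_bot[OF uV c1(1)] c1 by simp
              have duz: "d u z = 1" using d_edge E_sym z(3) c1u by blast
              have "d u z + d z q = d u q" using duz z(4) d_sym[OF z(1) qV] h True s_def t_def by linarith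
              then have "z \<in> Iv u q" using z(1) by (simp add: Iv_def)
              then have zI: "z \<in> Iv u x'" using I_trans[OF uV x'V h(2)] by blast
              show False
              proof (cases "t = 1")
                case False
                have "d c z = 2" using less.IH[of 2] h(1) zI duz True s_def t_def h False t0 by auto
                then show False using d_edge E_sym z(2) by fastforce
              next
                case True
                have "d q z = 0" using z(4) 2 \<open>s = 1\<close> h s_def t_def True by linarith
                then have "z = q" using d_zero qV z(1) by blast
                then have eqc: "E q c" using z(2) by simp
                have "d c x' \<le> d c q + d q x'" using d_tri cV qV x'V by blast
                moreover have "d c q = 1" using d_edge E_sym eqc by blast
                moreover have "d c x' = k + 2 - 1" using lemAC[OF t1 t2 t3 t4 h(1), of 1] \<open>s = 1\<close> s_def by simp
                ultimately show False using qw True k1 by linarith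
              qed
            next
              case False
              have ss: "d u c1 = Suc (s - 2)" using c1(3) s0 False by linarith
              obtain c2 where c2: "c2 \<in> Iv u x" "E c2 c1" "d u c2 = s - 2"
                using I_pred[OF uV xyV(1) c1(1) ss] by blast
              have c2V: "c2 \<in> V" using c2 Iv_V by blast
              have IH2: "d c2 q = N - 2" using less.IH[of "N - 2"] c2 h s0 False s_def t_def N2 by auto
              have "z = c2 \<or> E z c2"
                using cc[OF CC qV z(3) c2(2), of "N - 2"] z(4) IH2 d_sym[OF c2V qV] dqc1 nk h N2
                by auto
              then show False
              proof
                assume "z = c2" then show False using lev1[OF uV z(2)] c2 s_def s0 False by auto
              next
                assume ez2: "E z c2"
                have "d u c \<le> Suc (d u z)" using lev1[OF uV z(2)] by simp
                moreover have "d u z \<le> Suc (d u c2)" using lev1[OF uV E_sym[OF ez2]] by simp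
                ultimately have lz: "d u z = s - 1" using c2 s_def s0 False by linarith
                have "d z x \<le> d z c + d c x" using d_tri z(1) cV xyV by blast
                then have "d u z + d z x \<le> d u x" using d_edge[OF z(2)] cv lz lx sk s0 by linarith
                moreover have "d u x \<le> d u z + d z x" using d_tri uV z(1) xyV by blast
                ultimately have zI: "z \<in> Iv u x" using z(1) by (simp add: Iv_def)
                have "d z q = N - 1" using less.IH[of "N - 1"] zI h lz s0 s_def t_def by auto
                then show False using z(4) d_sym[OF z(1) qV] by linarith
              qed
            qed
          qed
        qed
      qed
    qed
  qed
qed

lemma claimC:
  assumes c: "c \<in> Iv u x" and q: "q \<in> Iv u x'"
  shows "d c q = min (d u c + d u q) (n - d u c - d u q)"
proof -
  have sk: "d u c \<le> k" "d u q \<le> k" using I_le c q lx t1 by fastforce+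
  show ?thesis
  proof (cases "d u c + d u q \<le> k")
    case True
    then have "d c q = d u c + d u q" using regUC_aux c q by blast
    then show ?thesis using True nk by simp
  next
    case False
    have "d c q = k + 2 - d u c + (k - d u q)"
      using regTC[OF c refl, of "k - d u q" q] False q sk by simp
    then show ?thesis using False nk sk by simp
  qed
qed

lemma C_False: False
proof -
  obtain a where a: "\<forall>i\<le>d u x. a i \<in> Iv u x \<and> d u (a i) = i" "\<forall>i<d u x. E (a i) (a (Suc i))"
    using geod_seq[OF uV xyV(1)] by blast
  obtain b where b: "\<forall>i\<le>d u x'. b i \<in> Iv u x' \<and> d u (b i) = i" "\<forall>i<d u x'. E (b i) (b (Suc i))"
    using geod_seq[OF uV x'V] by blast
  define a' where "a' = a(Suc k := y)"
  have a'lo: "i \<le> k \<Longrightarrow> a' i = a i" for i unfolding a'_def by simp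
  have a'k: "a' (Suc k) = y" unfolding a'_def by simp
  have a0: "a' 0 = u" "b 0 = u" using a b I_bot[OF uV] a'lo by auto
  have ak: "a k = x" "b k = x'" using a b I_top[OF uV] lx t1 xyV x'V by auto
  have A': "\<forall>i\<le>Suc k. a' i \<in> V \<and> d u (a' i) = i"
  proof (intro allI impI)
    fix i assume "i \<le> Suc k"
    then consider "i \<le> k" | "i = Suc k" by linarith
    then show "a' i \<in> V \<and> d u (a' i) = i"
      by cases (use a lx Iv_V a'lo a'k xyV ly in auto)
  qed
  have A2: "\<forall>i<Suc k. E (a' i) (a' (Suc i))"
  proof (intro allI impI)
    fix i assume "i < Suc k"
    then consider "i < k" | "i = k" by linarith
    then show "E (a' i) (a' (Suc i))"
      by cases (use a lx a'lo a'k ak xy in auto)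
  qed
  have B': "\<forall>i\<le>k. b i \<in> V \<and> d u (b i) = i" using b t1 Iv_V by auto
  have B2: "\<forall>i<k. E (b i) (b (Suc i))" using b t1 by auto
  have HA: "\<forall>i i'. i \<le> i' \<longrightarrow> i' \<le> Suc k \<longrightarrow> d (a' i) (a' i') = i' - i"
    using seq_dist[OF uV A' A2] by auto
  have HB: "\<forall>i i'. i \<le> i' \<longrightarrow> i' \<le> k \<longrightarrow> d (b i) (b i') = i' - i"
    using seq_dist[OF uV B' B2] by auto
  have x'I: "x' \<in> Iv u y" using t1 ly d_edge[OF t2] x'V by (simp add: Iv_def)
  have HX: "\<forall>i j. i \<le> Suc k \<longrightarrow> j \<le> k \<longrightarrow> d (a' i) (b j) = min (i + j) (n - i - j)"
  proof (intro allI impI)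
    fix i j assume ij: "i \<le> Suc k" "j \<le> k"
    have bj: "b j \<in> Iv u x'" "d u (b j) = j" using b t1 ij by auto
    show "d (a' i) (b j) = min (i + j) (n - i - j)"
    proof (cases "i \<le> k")
      case True
      then show ?thesis using claimC[OF _ bj(1)] a lx a'lo bj(2) by auto
    next
      case False
      then have ii: "i = Suc k" using ij by simp
      have "b j \<in> Iv u y" using I_trans[OF uV xyV(2) x'I bj(1)] .
      then have "d (b j) y = Suc k - j" using I_dist ly bj(2) by simp
      then have "d y (b j) = Suc k - j" using d_sym xyV Iv_V bj(1) by metis
      then show ?thesis using ii a'k nk ij by simp
    qed
  qed
  have VA: "\<forall>i\<le>Suc k. a' i \<in> V" using A' by blast
  have VB: "\<forall>i\<le>k. b i \<in> V" using B' by blast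
  show False
    by (rule two_geod_False[of n "Suc k" k a' b, OF _ _ _ _ _ _ A2 B2 _ HA HB HX VA VB])
       (use nk k1 a0 a'k ak t2 E_sym in auto)
qed

end


context bgraph
begin

lemma all_ok: "TCok n \<and> CCok n"
proof (induction n)
  case 0
  show ?case unfolding TCok_def CCok_def by simp
next
  case (Suc n)
  then have TCn: "TCok n" and CCn: "CCok n" by auto
  have A: "TCok (Suc n)" unfolding TCok_def
  proof (intro allI impI)
    fix u p q assume h: "u \<in> V" "E p q" "d u p = d u q" "1 \<le> d u p" "2 * d u p + 1 < Suc n"
    show "\<exists>z\<in>V. E z p \<and> E z q \<and> Suc (d u z) = d u p"
    proof (cases "2 * d u p + 1 < n")
      case True
      then show ?thesis using tc[OF TCn h(1) h(2) refl h(3)[symmetric] h(4)] by blast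
    next
      case False
      then have nk: "n = 2 * d u p + 1" using h by linarith
      have pV: "p \<in> V" "q \<in> V" using h E_V by auto
      show ?thesis
      proof (cases "d u p = 1")
        case True
        then have "E u p" "E u q" using d_one h pV by auto
        then show ?thesis using h(1) True by auto
      next
        case False
        show ?thesis
        proof (rule ccontr)
          assume nb: "\<not> (\<exists>z\<in>V. E z p \<and> E z q \<and> Suc (d u z) = d u p)"
          have nbad: "False" if "z \<in> V" "E z p" "E z q" "Suc (d u z) = d u p" for z
            using nb that by blast
          have k2: "2 \<le> d u p" using h(4) False by simp
          have "Tconf V E n u p q (d u p)"
            unfolding Tconf_def Tconf_axioms_def bgraph_def bgraph_axioms_def sgraph_def
            using sg cg br TCn CCn h(1) h(2) h(3)[symmetric] k2 nk nbad by blast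
          then show False by (rule Tconf.T_False)
        qed
      qed
    qed
  qed
  have B: "CCok (Suc n)" unfolding CCok_def
  proof (intro allI impI)
    fix u p q y assume h: "u \<in> V" "E p y" "E q y" "d u p = d u q" "d u y = Suc (d u p)" "2 * d u p + 2 < Suc n"
    show "p = q \<or> E p q"
    proof (cases "2 * d u p + 2 < n")
      case True
      then show ?thesis using cc[OF CCn h(1) h(2) h(3) refl h(4)[symmetric] h(5)] by blast
    next
      case False
      then have nk: "n = 2 * d u p + 2" using h by linarith
      have pV: "p \<in> V" "q \<in> V" using h E_V by auto
      show ?thesis
      proof (cases "d u p = 0")
        case True
        then have "u = p" "u = q" using d_zero[OF h(1) pV(1)] d_zero[OF h(1) pV(2)] h(4) by auto
        then show ?thesis by simp
      next
        case False
        show ?thesis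
        proof (rule ccontr)
          assume nb: "\<not> (p = q \<or> E p q)"
          have k1: "1 \<le> d u p" using False by simp
          have "Cconf2 V E n u p y (d u p) q"
            unfolding Cconf2_def Cconf2_axioms_def Cconf_def Cconf_axioms_def bgraph_def bgraph_axioms_def sgraph_def
            using sg cg br TCn CCn h(1) h(2) h(3) h(4) h(5) k1 nk nb by auto
          then show False by (rule Cconf2.C_False)
        qed
      qed
    qed
  qed
  show ?case using A B by blast
qed

lemma TC_all: "u \<in> V \<Longrightarrow> E p q \<Longrightarrow> d u p = d u q \<Longrightarrow> 1 \<le> d u p \<Longrightarrow> \<exists>z\<in>V. E z p \<and> E z q \<and> Suc (d u z) = d u p"
proof -
  assume h: "u \<in> V" "E p q" "d u p = d u q" "1 \<le> d u p"
  have "TCok (2 * d u p + 2)" using all_ok by blast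
  from tc[OF this h(1) h(2) refl h(3)[symmetric] h(4)] show ?thesis by simp
qed

lemma CC_all: "u \<in> V \<Longrightarrow> E p y \<Longrightarrow> E q y \<Longrightarrow> d u p = d u q \<Longrightarrow> d u y = Suc (d u p) \<Longrightarrow> p = q \<or> E p q"
proof -
  assume h: "u \<in> V" "E p y" "E q y" "d u p = d u q" "d u y = Suc (d u p)"
  have "CCok (2 * d u p + 3)" using all_ok by blast
  from cc[OF this h(1) h(2) h(3) refl h(4)[symmetric] h(5)] show ?thesis by simp
qed

lemma TDC_holds: "TDC V E"
  unfolding TDC_def
proof (intro ballI impI)
  fix u v w assume V: "u \<in> V" "v \<in> V" "w \<in> V" and h: "1 = d v w \<and> d v w < d u v \<and> d u v = d u w"
  from h have h1: "d v w = 1" and h2: "1 < d u v" and h3: "d u v = d u w" by auto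
  have vw: "E v w" using d_one[OF V(2) V(3) h1] .
  obtain z where z: "z \<in> V" "E z v" "E z w" "Suc (d u z) = d u v"
    using TC_all[OF V(1) vw h3] h2 by auto
  have X: "E z x" if x: "x \<in> V" "d x v = 1 \<and> d u x = d u v - 1 \<and> x \<noteq> z" for x
  proof -
    from x(2) have x1: "d x v = 1" and x2: "d u x = d u v - 1" and x3: "x \<noteq> z" by auto
    have exv: "E x v" using d_one[OF x(1) V(2) x1] .
    have "d u x = d u z" using x2 z(4) by simp
    then have "x = z \<or> E x z" using CC_all[OF V(1) exv z(2)] z(4) by simp
    then show ?thesis using x3 E_sym by blast
  qed
  have Y: "E z y" if y: "y \<in> V" "d y w = 1 \<and> d u y = d u w - 1 \<and> y \<noteq> z" for y
  proof -
    from y(2) have y1: "d y w = 1" and y2: "d u y = d u w - 1" and y3: "y \<noteq> z" by auto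
    have eyw: "E y w" using d_one[OF y(1) V(3) y1] .
    have "d u y = d u z" using y2 z(4) h3 by simp
    moreover have "d u w = Suc (d u y)" using y2 z(4) h3 by simp
    ultimately have "y = z \<or> E y z" using CC_all[OF V(1) eyw z(3)] by simp
    then show ?thesis using y3 E_sym by blast
  qed
  have z4: "d u z = d u v - 1" using z(4) by simp
  show "\<exists>z\<in>V. E z v \<and> E z w \<and> d u z = d u v - 1 \<and>
        (\<forall>x\<in>V. d x v = 1 \<and> d u x = d u v - 1 \<and> x \<noteq> z \<longrightarrow> E z x) \<and>
        (\<forall>y\<in>V. d y w = 1 \<and> d u y = d u w - 1 \<and> y \<noteq> z \<longrightarrow> E z y)"
  proof (rule bexI[OF _ z(1)], intro conjI ballI impI)
    show "E z v" "E z w" "d u z = d u v - 1" using z z4 by auto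
  next
    fix x assume "x \<in> V" "d x v = 1 \<and> d u x = d u v - 1 \<and> x \<noteq> z"
    then show "E z x" by (rule X)
  next
    fix y assume "y \<in> V" "d y w = 1 \<and> d u y = d u w - 1 \<and> y \<noteq> z"
    then show "E z y" by (rule Y)
  qed
qed

lemma QC_holds: "QC V E"
  unfolding QC_def
proof (intro ballI impI)
  fix u v w y assume V: "u \<in> V" "v \<in> V" "w \<in> V" "y \<in> V"
    and h: "d v y = 1 \<and> d w y = 1 \<and> 2 = d v w \<and> d v w \<le> d u v \<and> d u v = d u w \<and> d u w = d u y - 1"
  from h have h1: "d v y = 1" and h2: "d w y = 1" and h3: "d v w = 2" and h4: "2 \<le> d u v"
    and h5: "d u v = d u w" and h6: "d u w = d u y - 1" by auto
  have e1: "E v y" using d_one[OF V(2) V(4) h1] .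
  have e2: "E w y" using d_one[OF V(3) V(4) h2] .
  have s: "d u y = Suc (d u v)" using h4 h5 h6 by linarith
  have "v = w \<or> E v w" using CC_all[OF V(1) e1 e2 h5 s] .
  then have False
  proof
    assume "v = w" then show False using h3 V by simp
  next
    assume "E v w" then show False using h3 d_edge by simp
  qed
  then show "\<exists>z\<in>V. E z v \<and> E z w \<and> d u z = d u v - 1" by blast
qed

end

theorem lemma1:
  fixes V :: "'a set" and E :: "'a \<Rightarrow> 'a \<Rightarrow> bool"
  assumes "simple_graph V E" and "connected_graph V E" and "bridged V E"
  shows "TDC V E \<and> diamond_weakly_modular V E"
proof -
  interpret bgraph V E using assms by unfold_locales
  show ?thesis using TDC_holds QC_holds unfolding diamond_weakly_modular_def by blast
qed

end
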